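(* Assume $t\ge 2$, fix $(i,j)\in[d']\times[t]$ and $n\in[t]\setminus\{j\}$. The $\binom{d+2}{3}$ linear polynomials \[ L_{\mathcal K}=|\operatorname{Perm}(\mathcal K)|\,y^{[i]}_j(\mathcal K)-\sum_{\substack{\mathcal A\cup\{b\}=\mathcal K\\ |\mathcal A|=2}}|\operatorname{Perm}(\mathcal A)|\,y^{[i]}_{n,j}(\mathcal A,b),\qquad \mathcal K\in\operatorname{Mult}_3([d]), \] all belong to the vanishing ideal $J$ of the attention variety and are linearly independent.
   Context: Setup: $Q,K\in\mathbb R^{a\times d}$, $V=(v_{ik})\in\mathbb R^{d'\times d}$, $W=(Q,K,V)$, $A=K^\top Q$, $\varphi_W(X)=VX(X^\top AX)$ for $X=(x_{kn})\in\mathbb R^{d\times t}$. $\operatorname{Mult}_r([d])$ is the set of size-$r$ multisets on $[d]$; $\operatorname{Perm}(\mathcal M)$ the set of distinct orderings of a multiset. $c^{[i]}_j(\mathcal K)$ and $c^{[i]}_{n,j}(\mathcal A,b)$ are the coefficients of $\prod_{u\in\mathcal K}x_{uj}$ and $(\prod_{u\in\mathcal A}x_{un})x_{bj}$ in $\varphi_W(X)[i,j]$; the scaled coefficients are $y^{[i]}_j(\mathcal K)=c^{[i]}_j(\mathcal K)/|\operatorname{Perm}(\mathcal K)|$, $y^{[i]}_{n,j}(\mathcal A,b)=c^{[i]}_{n,j}(\mathcal A,b)/|\operatorname{Perm}(\mathcal A)|$. The map $\mu$ sends $W$ to the array of scaled coefficients, viewed as values of ambient coordinates with the same names; the attention variety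 is the Zariski closure of $\operatorname{im}\mu$ and $J$ its vanishing ideal. The sum in $L_{\mathcal K}$ runs over distinct decompositions of $\mathcal K$ into a size-2 multiset $\mathcal A$ and a singleton $\{b\}$. *)

theory Defs
  imports Main "HOL-Library.Poly_Mapping" "HOL-Combinatorics.Multiset_Permutations"
begin

type_synonym 'v mpoly = "('v \<Rightarrow>\<^sub>0 nat) \<Rightarrow>\<^sub>0 real"

definition mp_var :: "'v \<Rightarrow> 'v mpoly" where
  "mp_var v = Poly_Mapping.single (Poly_Mapping.single v 1) 1"

definition mp_const :: "real \<Rightarrow> 'v mpoly" where
  "mp_const c = Poly_Mapping.single 0 c"

definition mp_smult :: "real \<Rightarrow> 'v mpoly \<Rightarrow> 'v mpoly" where
  "mp_smult c f = Poly_Mapping.map (\<lambda>x. c * x) f"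

definition mp_vars :: "'v mpoly \<Rightarrow> 'v set" where
  "mp_vars f = \<Union> (Poly_Mapping.keys ` Poly_Mapping.keys f)"

definition mp_eval :: "'v mpoly \<Rightarrow> ('v \<Rightarrow> real) \<Rightarrow> real" where
  "mp_eval f p = (\<Sum>m\<in>Poly_Mapping.keys f.
      Poly_Mapping.lookup f m * (\<Prod>v\<in>Poly_Mapping.keys m. p v ^ Poly_Mapping.lookup m v))"

definition Mult :: "nat \<Rightarrow> nat \<Rightarrow> nat multiset set" where
  "Mult r d = {M. set_mset M \<subseteq> {1..d} \<and> size M = r}"

definition nPerm :: "nat multiset \<Rightarrow> nat" where
  "nPerm M = card (permutations_of_multiset M)"

text \<open>The polynomial phi_W(X)[i,j] in the entries x_{kn} of X (variable (k,n)),
  where A = K^T Q and phi_W(X) = V X (X^T A X).  Matrices are functions on indices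
  (1-based); Q,K are a x d, V is d' x d, X is d x t.\<close>
definition Amat :: "nat \<Rightarrow> nat \<Rightarrow> (nat \<Rightarrow> nat \<Rightarrow> real) \<Rightarrow> (nat \<Rightarrow> nat \<Rightarrow> real)
    \<Rightarrow> nat \<Rightarrow> nat \<Rightarrow> real" where
  "Amat a d Q K p q = (\<Sum>l\<in>{1..a}. K l p * Q l q)"

definition xmon :: "nat \<Rightarrow> nat \<Rightarrow> (nat \<times> nat) \<Rightarrow>\<^sub>0 nat" where
  "xmon k m = Poly_Mapping.single (k, m) 1"

definition phi_poly :: "nat \<Rightarrow> nat \<Rightarrow> nat \<Rightarrow> (nat \<Rightarrow> nat \<Rightarrow> real) \<Rightarrow> (nat \<Rightarrow> nat \<Rightarrow> real)
    \<Rightarrow> (nat \<Rightarrow> nat \<Rightarrow> real) \<Rightarrow> nat \<Rightarrow> nat \<Rightarrow> (nat \<times> nat) mpoly" where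
  "phi_poly a d t Q K V i j =
     (\<Sum>k\<in>{1..d}. \<Sum>m\<in>{1..t}. \<Sum>p\<in>{1..d}. \<Sum>q\<in>{1..d}.
        Poly_Mapping.single (xmon k m + xmon p m + xmon q j) (V i k * Amat a d Q K p q))"

definition colmon :: "nat multiset \<Rightarrow> nat \<Rightarrow> (nat \<times> nat) \<Rightarrow>\<^sub>0 nat" where
  "colmon M n = sum_mset (image_mset (\<lambda>u. xmon u n) M)"

definition coefC :: "nat \<Rightarrow> nat \<Rightarrow> nat \<Rightarrow> (nat \<Rightarrow> nat \<Rightarrow> real) \<Rightarrow> (nat \<Rightarrow> nat \<Rightarrow> real)
    \<Rightarrow> (nat \<Rightarrow> nat \<Rightarrow> real) \<Rightarrow> nat \<Rightarrow> nat \<Rightarrow> nat multiset \<Rightarrow> real" where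
  "coefC a d t Q K V i j M = Poly_Mapping.lookup (phi_poly a d t Q K V i j) (colmon M j)"

definition coefM :: "nat \<Rightarrow> nat \<Rightarrow> nat \<Rightarrow> (nat \<Rightarrow> nat \<Rightarrow> real) \<Rightarrow> (nat \<Rightarrow> nat \<Rightarrow> real)
    \<Rightarrow> (nat \<Rightarrow> nat \<Rightarrow> real) \<Rightarrow> nat \<Rightarrow> nat \<Rightarrow> nat \<Rightarrow> nat multiset \<Rightarrow> nat \<Rightarrow> real" where
  "coefM a d t Q K V i n j M b =
     Poly_Mapping.lookup (phi_poly a d t Q K V i j) (colmon M n + xmon b j)"

text \<open>Ambient coordinates: YC i j K is y^{[i]}_j(K), YM i n j A b is y^{[i]}_{n,j}(A,b).\<close>
datatype coord = YC nat nat "nat multiset" | YM nat nat nat "nat multiset" nat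

definition Coords :: "nat \<Rightarrow> nat \<Rightarrow> nat \<Rightarrow> coord set" where
  "Coords d d' t =
     {YC i j M | i j M. i \<in> {1..d'} \<and> j \<in> {1..t} \<and> M \<in> Mult 3 d} \<union>
     {YM i n j M b | i n j M b. i \<in> {1..d'} \<and> n \<in> {1..t} \<and> j \<in> {1..t} \<and> n \<noteq> j
        \<and> M \<in> Mult 2 d \<and> b \<in> {1..d}}"

definition mu :: "nat \<Rightarrow> nat \<Rightarrow> nat \<Rightarrow> nat \<Rightarrow> (nat \<Rightarrow> nat \<Rightarrow> real) \<Rightarrow> (nat \<Rightarrow> nat \<Rightarrow> real)
    \<Rightarrow> (nat \<Rightarrow> nat \<Rightarrow> real) \<Rightarrow> coord \<Rightarrow> real" where
  "mu a d d' t Q K V c =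
     (if c \<in> Coords d d' t then
        (case c of
           YC i j M \<Rightarrow> coefC a d t Q K V i j M / real (nPerm M)
         | YM i n j M b \<Rightarrow> coefM a d t Q K V i n j M b / real (nPerm M))
      else 0)"

definition ambient :: "coord set \<Rightarrow> (coord \<Rightarrow> real) set" where
  "ambient C = {p. \<forall>c. c \<notin> C \<longrightarrow> p c = 0}"

definition vanishing_ideal :: "coord set \<Rightarrow> (coord \<Rightarrow> real) set \<Rightarrow> coord mpoly set" where
  "vanishing_ideal C S = {f. mp_vars f \<subseteq> C \<and> (\<forall>p\<in>S. mp_eval f p = 0)}"

definition zariski_closure :: "coord set \<Rightarrow> (coord \<Rightarrow> real) set \<Rightarrow> (coord \<Rightarrow> real) set" where
  "zariski_closure C S =
     {p \<in> ambient C. \<forall>f\<in>vanishing_ideal C S. mp_eval f p = 0}"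

definition attention_variety :: "nat \<Rightarrow> nat \<Rightarrow> nat \<Rightarrow> nat \<Rightarrow> (coord \<Rightarrow> real) set" where
  "attention_variety a d d' t =
     zariski_closure (Coords d d' t) (range (\<lambda>(Q, K, V). mu a d d' t Q K V))"

definition J_ideal :: "nat \<Rightarrow> nat \<Rightarrow> nat \<Rightarrow> nat \<Rightarrow> coord mpoly set" where
  "J_ideal a d d' t = vanishing_ideal (Coords d d' t) (attention_variety a d d' t)"

text \<open>The linear polynomial L_K; decompositions K = A + {b} with |A| = 2 are indexed
  by the distinct elements b of K, with A = K - {b}.\<close>
definition L_poly :: "nat \<Rightarrow> nat \<Rightarrow> nat \<Rightarrow> nat multiset \<Rightarrow> coord mpoly" where
  "L_poly i n j M =
     mp_smult (real (nPerm M)) (mp_var (YC i j M)) -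
     (\<Sum>b\<in>set_mset M. mp_smult (real (nPerm (M - {#b#}))) (mp_var (YM i n j (M - {#b#}) b)))"

end

theory Submission imports Defs begin

lemma single1_inj: "Poly_Mapping.single a (1::nat) = Poly_Mapping.single b 1 \<longleftrightarrow> a = b"
proof
  assume "Poly_Mapping.single a (1::nat) = Poly_Mapping.single b 1"
  then have "Poly_Mapping.lookup (Poly_Mapping.single a (1::nat)) a = Poly_Mapping.lookup (Poly_Mapping.single b 1) a" by simp
  then show "a = b" by (simp add: lookup_single when_def split: if_splits)
qed simp

definition mon :: "('v \<Rightarrow>\<^sub>0 nat) \<Rightarrow> ('v \<Rightarrow> real) \<Rightarrow> real" where
  "mon m p = (\<Prod>v\<in>Poly_Mapping.keys m. p v ^ Poly_Mapping.lookup m v)"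

lemma mp_eval_sup:
  assumes "finite S" "Poly_Mapping.keys f \<subseteq> S"
  shows "mp_eval f p = (\<Sum>m\<in>S. Poly_Mapping.lookup f m * mon m p)"
  unfolding mp_eval_def mon_def
  by (rule sum.mono_neutral_left) (use assms in \<open>auto simp: in_keys_iff\<close>)

lemma mp_eval_add: "mp_eval (f + g) p = mp_eval f p + mp_eval g p"
proof -
  let ?S = "Poly_Mapping.keys f \<union> Poly_Mapping.keys g"
  have 1: "mp_eval (f + g) p = (\<Sum>m\<in>?S. Poly_Mapping.lookup (f+g) m * mon m p)"
    by (rule mp_eval_sup) (simp, rule keys_add)
  have 2: "mp_eval f p = (\<Sum>m\<in>?S. Poly_Mapping.lookup f m * mon m p)"
    by (rule mp_eval_sup) (simp, blast)
  have 3: "mp_eval g p = (\<Sum>m\<in>?S. Poly_Mapping.lookup g m * mon m p)"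
    by (rule mp_eval_sup) (simp, blast)
  have 4: "(\<Sum>m\<in>?S. Poly_Mapping.lookup (f+g) m * mon m p) = (\<Sum>m\<in>?S. Poly_Mapping.lookup f m * mon m p) + (\<Sum>m\<in>?S. Poly_Mapping.lookup g m * mon m p)"
    unfolding lookup_add distrib_right by (rule sum.distrib)
  show ?thesis unfolding 1 2 3 4 ..
qed

lemma mp_eval_diff: "mp_eval (f - g) p = mp_eval f p - mp_eval g p"
proof -
  let ?S = "Poly_Mapping.keys f \<union> Poly_Mapping.keys g"
  have 1: "mp_eval (f - g) p = (\<Sum>m\<in>?S. Poly_Mapping.lookup (f-g) m * mon m p)"
    by (rule mp_eval_sup) (simp, rule keys_diff)
  have 2: "mp_eval f p = (\<Sum>m\<in>?S. Poly_Mapping.lookup f m * mon m p)"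
    by (rule mp_eval_sup) (simp, blast)
  have 3: "mp_eval g p = (\<Sum>m\<in>?S. Poly_Mapping.lookup g m * mon m p)"
    by (rule mp_eval_sup) (simp, blast)
  have 4: "(\<Sum>m\<in>?S. Poly_Mapping.lookup (f-g) m * mon m p) = (\<Sum>m\<in>?S. Poly_Mapping.lookup f m * mon m p) - (\<Sum>m\<in>?S. Poly_Mapping.lookup g m * mon m p)"
    unfolding lookup_minus left_diff_distrib by (rule sum_subtractf)
  show ?thesis unfolding 1 2 3 4 ..
qed

lemma mp_eval_zero: "mp_eval 0 p = 0"
  by (simp add: mp_eval_def)

lemma mp_eval_sum: "mp_eval (sum f A) p = (\<Sum>x\<in>A. mp_eval (f x) p)"
  by (induction A rule: infinite_finite_induct) (auto simp: mp_eval_zero mp_eval_add)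

lemma lookup_smult: "Poly_Mapping.lookup (mp_smult c f) m = c * Poly_Mapping.lookup f m"
  by (simp add: mp_smult_def map.rep_eq when_def)

lemma keys_smult: "Poly_Mapping.keys (mp_smult c f) \<subseteq> Poly_Mapping.keys f"
proof
  fix m assume "m \<in> Poly_Mapping.keys (mp_smult c f)"
  then have "Poly_Mapping.lookup (mp_smult c f) m \<noteq> 0" using in_keys_iff by metis
  then have "Poly_Mapping.lookup f m \<noteq> 0" unfolding lookup_smult by auto
  then show "m \<in> Poly_Mapping.keys f" using in_keys_iff by metis
qed

lemma mp_eval_smult: "mp_eval (mp_smult c f) p = c * mp_eval f p"
proof -
  have "mp_eval (mp_smult c f) p = (\<Sum>m\<in>Poly_Mapping.keys f. Poly_Mapping.lookup (mp_smult c f) m * mon m p)"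
    by (rule mp_eval_sup) (simp, rule keys_smult)
  also have "\<dots> = c * (\<Sum>m\<in>Poly_Mapping.keys f. Poly_Mapping.lookup f m * mon m p)"
    by (simp only: lookup_smult sum_distrib_left mult.assoc)
  also have "\<dots> = c * mp_eval f p" using mp_eval_sup[of "Poly_Mapping.keys f" f p] by simp
  finally show ?thesis .
qed

lemma mp_eval_var: "mp_eval (mp_var v) p = p v"
  by (simp add: mp_eval_def mp_var_def)

lemma mp_vars_add: "mp_vars (f + g) \<subseteq> mp_vars f \<union> mp_vars g"
  unfolding mp_vars_def using keys_add[of f g] by blast
lemma mp_vars_diff: "mp_vars (f - g) \<subseteq> mp_vars f \<union> mp_vars g"
  unfolding mp_vars_def using keys_diff[of f g] by blast
lemma mp_vars_sum: "mp_vars (sum f A) \<subseteq> (\<Union>x\<in>A. mp_vars (f x))"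
  unfolding mp_vars_def using keys_sum[of f A] by blast
lemma mp_vars_smult: "mp_vars (mp_smult c f) \<subseteq> mp_vars f"
  unfolding mp_vars_def using keys_smult[of c f] by blast
lemma mp_vars_var: "mp_vars (mp_var v) = {v}"
  by (simp add: mp_vars_def mp_var_def)

lemma nPerm_pos: "nPerm M > 0"
  unfolding nPerm_def by (simp add: card_gt_0_iff)

definition mm :: "(nat \<times> nat) multiset \<Rightarrow> (nat \<times> nat) \<Rightarrow>\<^sub>0 nat" where
  "mm N = sum_mset (image_mset (\<lambda>x. Poly_Mapping.single x 1) N)"

lemma lookup_mm: "Poly_Mapping.lookup (mm N) x = count N x"
  unfolding mm_def by (induction N) (auto simp: lookup_add lookup_single when_def)

lemma mm_eq: "mm N1 = mm N2 \<longleftrightarrow> N1 = N2"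
proof
  assume "mm N1 = mm N2"
  then have "\<And>x. count N1 x = count N2 x" by (metis lookup_mm)
  then show "N1 = N2" by (rule multiset_eqI)
qed simp

lemma mm_add: "mm (N1 + N2) = mm N1 + mm N2"
  unfolding mm_def by simp

lemma xmon_mm: "xmon k m = mm {#(k,m)#}"
  unfolding mm_def xmon_def by simp

lemma colmon_mm: "colmon M n = mm (image_mset (\<lambda>u. (u,n)) M)"
  unfolding mm_def colmon_def xmon_def by (simp add: multiset.map_comp comp_def)

lemma triple_mm: "xmon k m + xmon p m + xmon q j = mm {#(k,m),(p,m),(q,j)#}"
  by (simp add: xmon_mm mm_add[symmetric] add_mset_commute)

lemma eqA:
  assumes "size M = 3"
  shows "({#(k,m),(p,m),(q,j)#} = image_mset (\<lambda>u. (u,j)) M) \<longleftrightarrow> (m = j \<and> {#k,p,q#} = M)"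
proof
  assume h: "{#(k,m),(p,m),(q,j)#} = image_mset (\<lambda>u. (u,j)) M"
  then have "image_mset snd {#(k,m),(p,m),(q,j)#} = image_mset snd (image_mset (\<lambda>u. (u,j)) M)" by simp
  then have "{#m,m,j#} = image_mset (\<lambda>u. j) M" by (simp add: multiset.map_comp comp_def)
  then have "m \<in># image_mset (\<lambda>u. j) M" by (metis union_single_eq_member)
  then have mj: "m = j" by auto
  have "image_mset fst {#(k,m),(p,m),(q,j)#} = image_mset fst (image_mset (\<lambda>u. (u,j)) M)" using h by simp
  then have "{#k,p,q#} = M" by (simp add: multiset.map_comp comp_def)
  with mj show "m = j \<and> {#k,p,q#} = M" by simp
qed auto

lemma eqB:
  assumes "n \<noteq> j"
  shows "({#(k,m),(p,m),(q,j)#} = image_mset (\<lambda>u. (u,n)) A + {#(b,j)#}) \<longleftrightarrow> (m = n \<and> q = b \<and> {#k,p#} = A)"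
proof
  assume h: "{#(k,m),(p,m),(q,j)#} = image_mset (\<lambda>u. (u,n)) A + {#(b,j)#}"
  then have "image_mset snd {#(k,m),(p,m),(q,j)#} = image_mset snd (image_mset (\<lambda>u. (u,n)) A + {#(b,j)#})" by simp
  then have h2: "{#m,m,j#} = image_mset (\<lambda>u. n) A + {#j#}" by (simp add: multiset.map_comp comp_def)
  have mn: "m = n"
  proof (rule ccontr)
    assume "m \<noteq> n"
    have "count {#m,m,j#} m \<ge> 2" by simp
    moreover have "count (image_mset (\<lambda>u. n) A + {#j#}) m \<le> 1"
      using \<open>m \<noteq> n\<close> by (auto simp: count_image_mset)
    ultimately show False using h2 by simp
  qed
  have "filter_mset (\<lambda>x. snd x = j) {#(k,m),(p,m),(q,j)#} = filter_mset (\<lambda>x. snd x = j) (image_mset (\<lambda>u. (u,n)) A + {#(b,j)#})"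
    using h by simp
  then have "{#(q,j)#} = {#(b,j)#}" using mn assms by (simp add: filter_mset_image_mset)
  then have qb: "q = b" by simp
  have "{#(k,n),(p,n)#} = image_mset (\<lambda>u. (u,n)) A" using h mn qb by (simp add: add_mset_commute)
  then have "image_mset fst {#(k,n),(p,n)#} = image_mset fst (image_mset (\<lambda>u. (u,n)) A)" by simp
  then have "{#k,p#} = A" by (simp add: multiset.map_comp comp_def)
  with mn qb show "m = n \<and> q = b \<and> {#k,p#} = A" by simp
qed auto

lemma sum_single_nz:
  assumes "finite T" "j \<in> T" "\<And>m. m \<in> T \<Longrightarrow> m \<noteq> j \<Longrightarrow> G m = 0"
  shows "sum G T = (G j :: real)"
proof -
  have "sum G T = G j + sum G (T - {j})" using assms by (simp add: sum.remove)
  also have "sum G (T - {j}) = 0" using assms by (intro sum.neutral) auto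
  finally show ?thesis by simp
qed

lemma coefC_formula:
  assumes "size M = 3" "j \<in> {1..t}"
  shows "coefC a d t Q K V i j M = (\<Sum>k\<in>{1..d}. \<Sum>p\<in>{1..d}. \<Sum>q\<in>{1..d}.
            if {#k,p,q#} = M then V i k * Amat a d Q K p q else 0)"
proof -
  have c: "(xmon k m + xmon p m + xmon q j = colmon M j) \<longleftrightarrow> (m = j \<and> {#k,p,q#} = M)" for k m p q
    unfolding triple_mm colmon_mm mm_eq by (rule eqA[OF assms(1)])
  have "coefC a d t Q K V i j M = (\<Sum>k\<in>{1..d}. \<Sum>m\<in>{1..t}. \<Sum>p\<in>{1..d}. \<Sum>q\<in>{1..d}.
            if m = j \<and> {#k,p,q#} = M then V i k * Amat a d Q K p q else 0)"
    unfolding coefC_def phi_poly_def lookup_sum lookup_single c by (simp add: when_def)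
  also have "\<dots> = (\<Sum>k\<in>{1..d}. \<Sum>p\<in>{1..d}. \<Sum>q\<in>{1..d}.
            if {#k,p,q#} = M then V i k * Amat a d Q K p q else 0)"
  proof (rule sum.cong[OF refl])
    fix k
    show "(\<Sum>m\<in>{1..t}. \<Sum>p\<in>{1..d}. \<Sum>q\<in>{1..d}.
            if m = j \<and> {#k,p,q#} = M then V i k * Amat a d Q K p q else 0) =
          (\<Sum>p\<in>{1..d}. \<Sum>q\<in>{1..d}. if {#k,p,q#} = M then V i k * Amat a d Q K p q else 0)"
      by (subst sum_single_nz[where j = j]) (use assms(2) in auto)
  qed
  finally show ?thesis .
qed

lemma coefM_formula:
  assumes "n \<in> {1..t}" "n \<noteq> j" "b \<in> {1..d}"
  shows "coefM a d t Q K V i n j A b = (\<Sum>k\<in>{1..d}. \<Sum>p\<in>{1..d}.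
            if {#k,p#} = A then V i k * Amat a d Q K p b else 0)"
proof -
  have c: "(xmon k m + xmon p m + xmon q j = colmon A n + xmon b j) \<longleftrightarrow> (m = n \<and> q = b \<and> {#k,p#} = A)" for k m p q
    unfolding triple_mm colmon_mm xmon_mm mm_add[symmetric] mm_eq using eqB[OF assms(2)] by (simp add: add_mset_commute)
  have "coefM a d t Q K V i n j A b = (\<Sum>k\<in>{1..d}. \<Sum>m\<in>{1..t}. \<Sum>p\<in>{1..d}. \<Sum>q\<in>{1..d}.
            if m = n \<and> q = b \<and> {#k,p#} = A then V i k * Amat a d Q K p q else 0)"
    unfolding coefM_def phi_poly_def lookup_sum lookup_single c by (simp add: when_def)
  also have "\<dots> = (\<Sum>k\<in>{1..d}. \<Sum>p\<in>{1..d}.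
            if {#k,p#} = A then V i k * Amat a d Q K p b else 0)"
  proof (rule sum.cong[OF refl])
    fix k
    have "(\<Sum>m\<in>{1..t}. \<Sum>p\<in>{1..d}. \<Sum>q\<in>{1..d}.
            if m = n \<and> q = b \<and> {#k,p#} = A then V i k * Amat a d Q K p q else 0) =
          (\<Sum>p\<in>{1..d}. \<Sum>q\<in>{1..d}. if q = b \<and> {#k,p#} = A then V i k * Amat a d Q K p q else 0)"
      by (subst sum_single_nz[where j = n]) (use assms(1) in auto)
    also have "\<dots> = (\<Sum>p\<in>{1..d}. if {#k,p#} = A then V i k * Amat a d Q K p b else 0)"
      by (rule sum.cong[OF refl], subst sum_single_nz[where j = b]) (use assms(3) in auto)
    finally show "(\<Sum>m\<in>{1..t}. \<Sum>p\<in>{1..d}. \<Sum>q\<in>{1..d}.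
            if m = n \<and> q = b \<and> {#k,p#} = A then V i k * Amat a d Q K p q else 0) =
          (\<Sum>p\<in>{1..d}. if {#k,p#} = A then V i k * Amat a d Q K p b else 0)" .
  qed
  finally show ?thesis .
qed

lemma key_identity:
  assumes M: "M \<in> Mult 3 d" and "n \<in> {1..t}" "n \<noteq> j" "j \<in> {1..t}"
  shows "coefC a d t Q K V i j M = (\<Sum>b\<in>set_mset M. coefM a d t Q K V i n j (M - {#b#}) b)"
proof -
  let ?f = "\<lambda>k p q. V i k * Amat a d Q K p q"
  have sM: "set_mset M \<subseteq> {1..d}" and sz: "size M = 3" using M by (auto simp: Mult_def)
  have "(\<Sum>b\<in>set_mset M. coefM a d t Q K V i n j (M - {#b#}) b)
     = (\<Sum>b\<in>set_mset M. \<Sum>k\<in>{1..d}. \<Sum>p\<in>{1..d}. if {#k,p#} = M - {#b#} then ?f k p b else 0)"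
    by (rule sum.cong[OF refl], rule coefM_formula) (use assms sM in auto)
  also have "\<dots> = (\<Sum>k\<in>{1..d}. \<Sum>b\<in>set_mset M. \<Sum>p\<in>{1..d}. if {#k,p#} = M - {#b#} then ?f k p b else 0)"
    by (rule sum.swap)
  also have "\<dots> = (\<Sum>k\<in>{1..d}. \<Sum>p\<in>{1..d}. \<Sum>b\<in>set_mset M. if {#k,p#} = M - {#b#} then ?f k p b else 0)"
    by (rule sum.cong[OF refl], rule sum.swap)
  also have "\<dots> = (\<Sum>k\<in>{1..d}. \<Sum>p\<in>{1..d}. \<Sum>q\<in>{1..d}. if {#k,p,q#} = M then ?f k p q else 0)"
  proof (intro sum.cong[OF refl])
    fix k p
    have "(\<Sum>q\<in>{1..d}. if {#k,p,q#} = M then ?f k p q else 0) = (\<Sum>q\<in>set_mset M. if {#k,p,q#} = M then ?f k p q else 0)"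
      by (rule sum.mono_neutral_right) (use sM in auto)
    also have "\<dots> = (\<Sum>b\<in>set_mset M. if {#k,p#} = M - {#b#} then ?f k p b else 0)"
    proof (rule sum.cong[OF refl])
      fix q assume q: "q \<in># M"
      have "({#k,p,q#} = M) \<longleftrightarrow> ({#k,p#} = M - {#q#})"
      proof -
        have "{#k,p,q#} = add_mset q {#k,p#}" by (simp add: add_mset_commute)
        moreover have "M = add_mset q (M - {#q#})" using q by simp
        ultimately show ?thesis by (metis add_mset_remove_trivial)
      qed
      then show "(if {#k,p,q#} = M then ?f k p q else 0) = (if {#k,p#} = M - {#q#} then ?f k p q else 0)" by simp
    qed
    finally show "(\<Sum>b\<in>set_mset M. if {#k,p#} = M - {#b#} then ?f k p b else 0) = (\<Sum>q\<in>{1..d}. if {#k,p,q#} = M then ?f k p q else 0)" by simp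
  qed
  also have "\<dots> = coefC a d t Q K V i j M"
    by (rule coefC_formula[symmetric]) (use assms sz in auto)
  finally show ?thesis by simp
qed

lemma Mult_eq: "Mult r d = multisets_of_size {1..d} r"
  by (simp add: Mult_def multisets_of_size_def)

lemma finite_Mult: "finite (Mult r d)"
  unfolding Mult_eq by (rule finite_multisets_of_size) simp

lemma mp_eval_L: "mp_eval (L_poly i n j M) p = real (nPerm M) * p (YC i j M)
   - (\<Sum>b\<in>set_mset M. real (nPerm (M - {#b#})) * p (YM i n j (M - {#b#}) b))"
  unfolding L_poly_def mp_eval_diff mp_eval_sum mp_eval_smult mp_eval_var ..

lemma vars_L: "mp_vars (L_poly i n j M) \<subseteq> insert (YC i j M) ((\<lambda>b. YM i n j (M - {#b#}) b) ` set_mset M)"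
proof -
  have "mp_vars (L_poly i n j M) \<subseteq> mp_vars (mp_smult (real (nPerm M)) (mp_var (YC i j M))) \<union>
     mp_vars (\<Sum>b\<in>set_mset M. mp_smult (real (nPerm (M - {#b#}))) (mp_var (YM i n j (M - {#b#}) b)))"
    unfolding L_poly_def by (rule mp_vars_diff)
  moreover have "mp_vars (mp_smult (real (nPerm M)) (mp_var (YC i j M))) \<subseteq> {YC i j M}"
    using mp_vars_smult mp_vars_var by metis
  moreover have "mp_vars (\<Sum>b\<in>set_mset M. mp_smult (real (nPerm (M - {#b#}))) (mp_var (YM i n j (M - {#b#}) b)))
     \<subseteq> (\<Union>b\<in>set_mset M. mp_vars (mp_smult (real (nPerm (M - {#b#}))) (mp_var (YM i n j (M - {#b#}) b))))"
    by (rule mp_vars_sum)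
  moreover have "\<And>b. mp_vars (mp_smult (real (nPerm (M - {#b#}))) (mp_var (YM i n j (M - {#b#}) b))) \<subseteq> {YM i n j (M - {#b#}) b}"
    using mp_vars_smult mp_vars_var by metis
  ultimately show ?thesis by blast
qed

lemma lookup_var: "Poly_Mapping.lookup (mp_var v) (Poly_Mapping.single w 1) = (if v = w then 1 else 0)"
  unfolding mp_var_def lookup_single when_def single1_inj by simp

lemma lookup_L: "Poly_Mapping.lookup (L_poly i n j M) (Poly_Mapping.single (YC i j M0) 1) = (if M = M0 then real (nPerm M) else 0)"
  unfolding L_poly_def lookup_minus lookup_sum lookup_smult lookup_var by simp

theorem mainTheorem5:
  fixes a d d' t i j n :: nat
  assumes "t \<ge> 2" and "i \<in> {1..d'}" and "j \<in> {1..t}" and "n \<in> {1..t}" and "n \<noteq> j"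
  shows "card (Mult 3 d) = (d + 2) choose 3
    \<and> (\<forall>M\<in>Mult 3 d. L_poly i n j M \<in> J_ideal a d d' t)
    \<and> (\<forall>c :: nat multiset \<Rightarrow> real.
          (\<Sum>M\<in>Mult 3 d. mp_smult (c M) (L_poly i n j M)) = 0
          \<longrightarrow> (\<forall>M\<in>Mult 3 d. c M = 0))"
proof (intro conjI ballI allI impI)
  show "card (Mult 3 d) = (d + 2) choose 3"
    unfolding Mult_eq by (subst card_multisets_of_size) auto
next
  fix M assume M: "M \<in> Mult 3 d"
  let ?C = "Coords d d' t"
  have sM: "set_mset M \<subseteq> {1..d}" and sz: "size M = 3" using M by (auto simp: Mult_def)
  have YC: "YC i j M \<in> ?C" using assms M by (auto simp: Coords_def)
  have YM: "YM i n j (M - {#b#}) b \<in> ?C" if b: "b \<in># M" for b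
  proof -
    have "size (M - {#b#}) = 2" using b sz by (simp add: size_Diff_singleton)
    moreover have "set_mset (M - {#b#}) \<subseteq> {1..d}" using sM by (meson in_diffD subset_iff)
    ultimately have "M - {#b#} \<in> Mult 2 d" by (simp add: Mult_def)
    then show ?thesis using assms b sM unfolding Coords_def by blast
  qed
  have vars: "mp_vars (L_poly i n j M) \<subseteq> ?C"
    using vars_L[of i n j M] YC YM by blast
  have van: "L_poly i n j M \<in> vanishing_ideal ?C (range (\<lambda>(Q, K, V). mu a d d' t Q K V))"
    unfolding vanishing_ideal_def
  proof (intro CollectI conjI vars ballI)
    fix x assume "x \<in> range (\<lambda>(Q, K, V). mu a d d' t Q K V)"
    then obtain Q K V where x: "x = mu a d d' t Q K V" by auto
    have e1: "real (nPerm M) * x (YC i j M) = coefC a d t Q K V i j M"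
      using YC nPerm_pos[of M] by (simp add: x mu_def)
    have e2: "real (nPerm (M - {#b#})) * x (YM i n j (M - {#b#}) b) = coefM a d t Q K V i n j (M - {#b#}) b"
      if "b \<in># M" for b
      using YM[OF that] nPerm_pos[of "M - {#b#}"] by (simp add: x mu_def)
    show "mp_eval (L_poly i n j M) x = 0"
      unfolding mp_eval_L e1 using e2 key_identity[OF M assms(4,5,3), of a Q K V i]
      by simp
  qed
  show "L_poly i n j M \<in> J_ideal a d d' t"
    unfolding J_ideal_def vanishing_ideal_def
  proof (intro CollectI conjI vars ballI)
    fix p assume "p \<in> attention_variety a d d' t"
    then show "mp_eval (L_poly i n j M) p = 0"
      using van unfolding attention_variety_def zariski_closure_def by blast
  qed
next
  fix c :: "nat multiset \<Rightarrow> real" and M0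
  assume h: "(\<Sum>M\<in>Mult 3 d. mp_smult (c M) (L_poly i n j M)) = 0" and M0: "M0 \<in> Mult 3 d"
  have "0 = Poly_Mapping.lookup (\<Sum>M\<in>Mult 3 d. mp_smult (c M) (L_poly i n j M)) (Poly_Mapping.single (YC i j M0) 1)"
    by (simp only: h lookup_zero)
  also have "\<dots> = (\<Sum>M\<in>Mult 3 d. c M * (if M = M0 then real (nPerm M) else 0))"
    unfolding lookup_sum lookup_smult lookup_L ..
  also have "\<dots> = c M0 * real (nPerm M0)"
    by (subst sum_single_nz[where j=M0]) (use M0 finite_Mult in auto)
  finally show "c M0 = 0" using nPerm_pos[of M0] by simp
qed

end
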